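(* Let $\mathcal{A}$ be a separating union-closed family with base set $[n]$ and height $h$, and suppose $h = 4 \leq n$ and $0 \leq |\mathcal{B}(\mathcal{A})| \leq 2$. Then there exists an element of $[n]$ that is contained in at least $\frac{|\mathcal{A}|}{2}$ member sets of $\mathcal{A}$.
   Context: A family of sets $\mathcal{A}$ is union-closed if it is a finite family of distinct finite sets with at least one nonempty member set, and $X,Y\in\mathcal{A}$ implies $X\cup Y\in\mathcal{A}$ (the empty set may be a member). For a family $\mathcal{F}$, $b(\mathcal{F})=\bigcup_{F\in\mathcal{F}}F$; the base set $b(\mathcal{A})$ is denoted $[n]=\{1,\dots,n\}$. $\mathcal{A}$ is separating if for any two distinct $x,y\in[n]$ there is $A\in\mathcal{A}$ containing exactly one of $x,y$. A chain in $\mathcal{A}$ is a subfamily any two distinct members of which are comparable under proper inclusion; the height $h$ of $\mathcal{A}$ is the maximum size of a chain in $\mathcal{A}$. For real $x\ge 0$, $\mathcal{A}_{<x}=\{A\in\mathcal{A} : |A|<x\}$. For $\mathcal{S}\subseteq\mathcal{A}$ and $S\in\mathcal{S}$, $\mathrm{irr}_{\mathcal{S}}(S)=\{s\in S : s\notin b(\mathcal{S}\setminus\{S\})\}$, and $\mathcal{S}$ is irredundant if $\mathrm{irr}_{\mathcal{S}}(S)\neq\emptyset$ for every $S\in\mathcal{S}$. Set $B=b(\mathcal{A}_{<n/2})$, and let $\mathcal{B}=\mathcal{B}(\mathcal{A})$ denote any irredundant subfamily of $\mathcal{A}_{<n/2}$ of minimum size such that $b(\mathcal{B})=B$. *)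

theory Defs
  imports Complex_Main
begin

definition union_closed :: "'a set set \<Rightarrow> bool" where
  "union_closed A \<longleftrightarrow> finite A \<and> (\<forall>X\<in>A. finite X) \<and> (\<exists>X\<in>A. X \<noteq> {}) \<and>
     (\<forall>X\<in>A. \<forall>Y\<in>A. X \<union> Y \<in> A)"

definition separating :: "'a set set \<Rightarrow> bool" where
  "separating A \<longleftrightarrow> (\<forall>x\<in>\<Union>A. \<forall>y\<in>\<Union>A. x \<noteq> y \<longrightarrow> (\<exists>X\<in>A. (x \<in> X) \<noteq> (y \<in> X)))"

definition is_chain :: "'a set set \<Rightarrow> bool" where
  "is_chain C \<longleftrightarrow> (\<forall>X\<in>C. \<forall>Y\<in>C. X \<noteq> Y \<longrightarrow> X \<subset> Y \<or> Y \<subset> X)"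

definition height :: "'a set set \<Rightarrow> nat" where
  "height A = Max {card C | C. C \<subseteq> A \<and> is_chain C}"

definition family_lt :: "'a set set \<Rightarrow> real \<Rightarrow> 'a set set" where
  "family_lt A x = {X\<in>A. real (card X) < x}"

definition irr :: "'a set set \<Rightarrow> 'a set \<Rightarrow> 'a set" where
  "irr S X = {s\<in>X. s \<notin> \<Union>(S - {X})}"

definition irredundant :: "'a set set \<Rightarrow> bool" where
  "irredundant S \<longleftrightarrow> (\<forall>X\<in>S. irr S X \<noteq> {})"

definition B_size :: "'a set set \<Rightarrow> nat \<Rightarrow> nat" where
  "B_size A n = (LEAST k. \<exists>S. S \<subseteq> family_lt A (real n / 2) \<and> irredundant S \<and>
       \<Union>S = \<Union>(family_lt A (real n / 2)) \<and> card S = k)"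

end

theory Submission
  imports Defs
begin


lemma avg:
  fixes A :: "'a set set" and S :: "'a set"
  assumes finA: "finite A" and finS: "finite S" and ne: "S \<noteq> {}"
    and h: "(\<Sum>Y\<in>A. 2 * int (card (Y \<inter> S)) - int (card S)) \<ge> 0"
  shows "\<exists>x\<in>S. real (card {Y\<in>A. x \<in> Y}) \<ge> real (card A) / 2"
proof (rule ccontr)
  assume "\<not> ?thesis"
  then have lt: "\<forall>x\<in>S. 2 * card {Y\<in>A. x \<in> Y} < card A" by force
  have c1: "\<And>Y. card (Y \<inter> S) = (\<Sum>x\<in>S. if x \<in> Y then 1 else 0 :: nat)"
    using finS by (simp add: sum.If_cases Int_commute Int_def)
  have c2: "\<And>x. card {Y\<in>A. x \<in> Y} = (\<Sum>Y\<in>A. if x \<in> Y then 1 else 0 :: nat)"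
    using finA by (simp add: sum.If_cases Int_def)
  have eq: "(\<Sum>Y\<in>A. card (Y \<inter> S)) = (\<Sum>x\<in>S. card {Y\<in>A. x \<in> Y})"
    unfolding c1 c2 by (rule sum.swap)
  have "(\<Sum>x\<in>S. 2 * card {Y\<in>A. x \<in> Y}) < (\<Sum>x\<in>S. card A)"
    using lt finS ne by (intro sum_strict_mono) auto
  then have "2 * (\<Sum>Y\<in>A. card (Y \<inter> S)) < card S * card A"
    by (simp add: eq sum_distrib_left)
  then have "2 * int (\<Sum>Y\<in>A. card (Y \<inter> S)) < int (card S) * int (card A)"
    by (metis of_nat_less_iff of_nat_mult of_nat_numeral)
  moreover have "(\<Sum>Y\<in>A. 2 * int (card (Y \<inter> S)) - int (card S)) = 2 * int (\<Sum>Y\<in>A. card (Y \<inter> S)) - int (card S) * int (card A)"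
    by (simp add: sum_subtractf sum_distrib_left of_nat_sum)
  ultimately show False using h by linarith
qed

lemma union_mem:
  assumes "\<forall>X\<in>A. \<forall>Y\<in>A. X \<union> Y \<in> A" "finite F" "F \<noteq> {}" "F \<subseteq> A"
  shows "\<Union>F \<in> A"
  using assms(2,3,4)
proof (induction F rule: finite_ne_induct)
  case (singleton x) then show ?case by simp
next
  case (insert x F) then show ?case using assms(1) by simp
qed

lemma chain_le4:
  assumes "height A = 4" "finite A" "C \<subseteq> A" "is_chain C"
  shows "card C \<le> 4"
proof -
  have "{card C |C. C \<subseteq> A \<and> is_chain C} \<subseteq> {..card A}"
    using assms(2) by (auto intro: card_mono)
  then have fin: "finite {card C |C. C \<subseteq> A \<and> is_chain C}" by (rule finite_subset) simp
  have "card C \<in> {card C |C. C \<subseteq> A \<and> is_chain C}" using assms(3,4) by blast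
  then have "card C \<le> Max {card C |C. C \<subseteq> A \<and> is_chain C}" using fin by (rule Max_ge[rotated])
  then show ?thesis using assms(1) unfolding height_def by simp
qed

lemma no5:
  assumes "height A = 4" "finite A" "V1 \<in> A" "V2 \<in> A" "V3 \<in> A" "V4 \<in> A" "V5 \<in> A"
    "V1 \<subset> V2" "V2 \<subset> V3" "V3 \<subset> V4" "V4 \<subset> V5"
  shows False
proof -
  have a: "V1 < V3" "V1 < V4" "V1 < V5" "V2 < V4" "V2 < V5" "V3 < V5"
    using assms(8-11) by (meson order.strict_trans)+
  have ch: "is_chain {V1,V2,V3,V4,V5}"
    unfolding is_chain_def using a assms(8-11) by auto
  have d: "V1 \<noteq> V2" "V1 \<noteq> V3" "V1 \<noteq> V4" "V1 \<noteq> V5" "V2 \<noteq> V3" "V2 \<noteq> V4"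
    "V2 \<noteq> V5" "V3 \<noteq> V4" "V3 \<noteq> V5" "V4 \<noteq> V5"
    using a assms(8-11) by (auto dest: less_imp_neq)
  have "card {V1,V2,V3,V4,V5} = 5"
    using d by simp
  moreover have "card {V1,V2,V3,V4,V5} \<le> 4"
    using chain_le4[OF assms(1,2) _ ch] assms(3-7) by auto
  ultimately show False by simp
qed



lemma core:
  fixes A :: "'a set set" and N B :: "'a set"
  assumes fin: "finite A" and fN: "finite N"
    and uc: "\<forall>X\<in>A. \<forall>Y\<in>A. X \<union> Y \<in> A"
    and sub: "\<forall>Y\<in>A. Y \<subseteq> N" and NA: "N \<in> A"
    and sep: "\<forall>x\<in>N. \<forall>y\<in>N. x \<noteq> y \<longrightarrow> (\<exists>X\<in>A. (x\<in>X) \<noteq> (y\<in>X))"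
    and no5: "\<And>V1 V2 V3 V4 V5. V1\<in>A \<Longrightarrow> V2\<in>A \<Longrightarrow> V3\<in>A \<Longrightarrow> V4\<in>A \<Longrightarrow> V5\<in>A \<Longrightarrow>
       V1 \<subset> V2 \<Longrightarrow> V2 \<subset> V3 \<Longrightarrow> V3 \<subset> V4 \<Longrightarrow> V4 \<subset> V5 \<Longrightarrow> False"
    and BA: "B \<in> A" and BN: "B \<subseteq> N"
    and small: "\<forall>Y\<in>A. 2 * card Y < card N \<longrightarrow> Y \<subseteq> B"
    and T2: "card (N - B) \<ge> 2"
  shows "(\<Sum>Y\<in>A. 2 * int (card Y) - int (card N)) \<ge> 0"
proof -
  define f where "f = (\<lambda>Y::'a set. 2 * int (card Y) - int (card N))"
  have fB: "finite B" using fN BN finite_subset by blast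
  have cT: "card (N - B) = card N - card B" using BN fB by (simp add: card_Diff_subset)
  have cBN: "card B \<le> card N" using BN fN by (simp add: card_mono)
  have nn: "\<And>Y. Y \<in> A \<Longrightarrow> \<not> Y \<subseteq> B \<Longrightarrow> 0 \<le> f Y"
    using small unfolding f_def by force
  have NnB: "\<not> N \<subseteq> B" using T2 BN by (metis Diff_eq_empty_iff card.empty not_numeral_le_zero)
  define AB where "AB = {Y\<in>A. Y \<subseteq> B}"
  define W where "W = {Y\<in>A. Y \<subseteq> B \<and> Y \<noteq> B}"
  have ABW: "AB = insert B W" "B \<notin> W" using BA unfolding AB_def W_def by auto
  have finW: "finite W" using fin unfolding W_def by simp
  have split: "sum f A = sum f (A - AB) + sum f AB"
    using fin by (intro sum.subset_diff) (auto simp: AB_def)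
  have sAB: "sum f AB = f B + sum f W" using ABW finW by simp
  show ?thesis
  proof (cases "W = {}")
    case True
    have "f N \<le> sum f (A - AB)"
      using NA NnB fin nn by (intro member_le_sum) (auto simp: AB_def)
    then have "f N + f B \<le> sum f A" using split sAB True by simp
    moreover have "f N + f B \<ge> 0" unfolding f_def by simp
    ultimately show ?thesis unfolding f_def by linarith
  next
    case False
    then obtain W0 where W0: "W0 \<in> A" "W0 \<subset> B" unfolding W_def by blast
    have sepM: "\<exists>M\<in>A. B \<subseteq> M \<and> M \<subseteq> N \<and> ((x \<in> M \<and> y \<notin> M) \<or> (y \<in> M \<and> x \<notin> M))"
      if xyp: "x \<in> N - B" "y \<in> N - B" "x \<noteq> y" for x y
    proof -
      obtain X where X: "X \<in> A" "(x\<in>X) \<noteq> (y\<in>X)" using sep xyp by blast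
      show ?thesis using X xyp uc BA sub by (intro bexI[of _ "B \<union> X"]) auto
    qed
    have mid_union: "M \<union> M' = N"
      if "M\<in>A" "M'\<in>A" "B \<subset> M" "M \<subset> N" "B \<subset> M'" "M' \<subset> N" "M \<noteq> M'" for M M'
    proof (rule ccontr)
      assume ne: "M \<union> M' \<noteq> N"
      have U: "M \<union> M' \<in> A" using uc that by blast
      have "M \<union> M' \<subset> N" using ne that by auto
      moreover have "M \<subset> M \<union> M' \<or> M' \<subset> M \<union> M'" using that by auto
      ultimately show False
        using no5[OF W0(1) BA _ U NA W0(2)] that by blast
    qed
    have mid_single: "x = y"
      if "M \<in> A" "B \<subset> M" "M \<subset> N" "x \<in> N - M" "y \<in> N - M" for M x y
    proof (rule ccontr)
      assume xy: "x \<noteq> y"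
      have "x \<in> N - B" "y \<in> N - B" using that by auto
      then obtain M' where M': "M'\<in>A" "B \<subseteq> M'" "M' \<subseteq> N" "(x \<in> M' \<and> y \<notin> M') \<or> (y \<in> M' \<and> x \<notin> M')"
        using sepM xy by blast
      have "B \<subset> M'" "M' \<subset> N" "M \<noteq> M'" using M' that by auto
      then have "M \<union> M' = N" using mid_union[OF that(1) M'(1) that(2,3)] by blast
      then show False using M' that by auto
    qed
    obtain x0 where x0: "x0 \<in> N - B" using NnB by blast
    have "card (N - B - {x0}) \<ge> 1" using T2 x0 fN by (simp add: card_Diff_singleton)
    then obtain y0 where y0: "y0 \<in> N - B" "y0 \<noteq> x0"
      by (metis Diff_eq_empty_iff Diff_iff card.empty empty_subsetI insertI1 not_one_le_zero subsetI)
    obtain M0 where M0: "M0 \<in> A" "B \<subset> M0" "M0 \<subset> N"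
      using sepM[OF x0 y0(1) y0(2)[symmetric]] x0 y0 by blast
    have Wpair: "V \<union> V' = B" if "V \<in> W" "V' \<in> W" "V \<noteq> V'" for V V'
    proof (rule ccontr)
      assume ne: "V \<union> V' \<noteq> B"
      have U: "V \<union> V' \<in> A" using uc that unfolding W_def by blast
      have "V \<union> V' \<subset> B" using ne that unfolding W_def by auto
      moreover have "V \<subset> V \<union> V' \<or> V' \<subset> V \<union> V'" using that by auto
      moreover have "V \<in> A" "V' \<in> A" using that unfolding W_def by auto
      ultimately show False
        using no5[OF _ U BA M0(1) NA _ _ M0(2,3)] by blast
    qed
    define Q where "Q = {x \<in> N - B. N - {x} \<in> A}"
    have TQ: "card (N - B - Q) \<le> 1"
    proof -
      have "\<forall>x\<in>N - B - Q. \<forall>y\<in>N - B - Q. x = y"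
      proof (intro ballI, rule ccontr)
        fix x y assume xy: "x \<in> N - B - Q" "y \<in> N - B - Q" "x \<noteq> y"
        then obtain M' where M': "M'\<in>A" "B \<subseteq> M'" "M' \<subseteq> N" "(x \<in> M' \<and> y \<notin> M') \<or> (y \<in> M' \<and> x \<notin> M')"
          using sepM by blast
        have mid: "B \<subset> M'" "M' \<subset> N" using M' xy by auto
        have key: "\<And>z. z \<in> N - M' \<Longrightarrow> N - {z} \<in> A"
        proof -
          fix z assume z: "z \<in> N - M'"
          have "M' = N - {z}"
            using mid_single[OF M'(1) mid, of z] z M'(3) by blast
          then show "N - {z} \<in> A" using M'(1) by simp
        qed
        show False
          using M'(4) key xy M'(3) unfolding Q_def by auto
      qed
      then show ?thesis using fN by (simp add: card_le_Suc0_iff_eq)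
    qed
    have QT: "Q \<subseteq> N - B" unfolding Q_def by auto
    have finQ: "finite Q" using QT fN finite_subset by blast
    have cQ: "card (N - B) \<le> card Q + 1"
    proof -
      have "N - B = Q \<union> (N - B - Q)" using QT by auto
      then have "card (N - B) \<le> card Q + card (N - B - Q)"
        by (metis card_Un_le)
      then show ?thesis using TQ by linarith
    qed
    define QQ where "QQ = (\<lambda>x. N - {x}) ` Q"
    have injQ: "inj_on (\<lambda>x. N - {x}) Q"
      using QT by (auto simp: inj_on_def)
    have fQQ: "\<And>x. x \<in> Q \<Longrightarrow> f (N - {x}) = int (card N) - 2"
    proof -
      fix x assume "x \<in> Q"
      then have xN: "x \<in> N" using QT by auto
      then have "card N \<ge> 1" using fN by (metis One_nat_def Suc_leI card_gt_0_iff empty_iff)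
      then show "f (N - {x}) = int (card N) - 2"
        using xN fN unfolding f_def by (simp add: card_Diff_singleton of_nat_diff)
    qed
    have sQQ: "sum f QQ = int (card Q) * (int (card N) - 2)"
      unfolding QQ_def using sum.reindex[OF injQ, of f] fQQ by simp
    have QQsub: "insert N QQ \<subseteq> A - AB"
    proof -
      have "N - {x} \<in> A - AB" if "x \<in> Q" for x
      proof -
        have "x \<in> N - B" using that QT by auto
        then obtain z where "z \<in> N - B" "z \<noteq> x" using x0 y0 by metis
        then show ?thesis using that unfolding Q_def AB_def by auto
      qed
      then show ?thesis using NA NnB unfolding QQ_def AB_def by auto
    qed
    have NQQ: "N \<notin> QQ" using QT unfolding QQ_def by auto
    have finQQ: "finite QQ" using finQ unfolding QQ_def by simp
    have "sum f (insert N QQ) \<le> sum f (A - AB)"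
      using fin QQsub nn by (intro sum_mono2) (auto simp: AB_def)
    then have s1: "f N + sum f QQ \<le> sum f (A - AB)" using NQQ finQQ by simp
    have cV: "\<And>V. V \<in> W \<Longrightarrow> int (card V) = int (card B) - int (card (B - V))"
      unfolding W_def using fB by (auto simp: card_Diff_subset card_mono finite_subset of_nat_diff)
    have disj: "\<forall>V\<in>W. \<forall>V'\<in>W. V \<noteq> V' \<longrightarrow> (B - V) \<inter> (B - V') = {}"
      using Wpair by blast
    have sc: "(\<Sum>V\<in>W. card (B - V)) = card (\<Union>V\<in>W. B - V)"
      using card_UN_disjoint[OF finW _ disj] fB by simp
    have sc2: "card (\<Union>V\<in>W. B - V) \<le> card B" using fB by (intro card_mono) auto
    have sc3: "card W \<le> (\<Sum>V\<in>W. card (B - V))"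
    proof -
      have "card W = (\<Sum>V\<in>W. 1::nat)" by simp
      also have "\<dots> \<le> (\<Sum>V\<in>W. card (B - V))"
      proof (rule sum_mono)
        fix V assume "V \<in> W"
        then have "B - V \<noteq> {}" unfolding W_def by auto
        then show "1 \<le> card (B - V)" using fB by (simp add: Suc_leI card_gt_0_iff)
      qed
      finally show ?thesis .
    qed
    have sW: "sum f W = int (card W) * (2 * int (card B) - int (card N)) - 2 * int (\<Sum>V\<in>W. card (B - V))"
    proof -
      have "sum f W = (\<Sum>V\<in>W. (2 * int (card B) - int (card N)) - 2 * int (card (B - V)))"
        unfolding f_def by (intro sum.cong) (auto simp: cV)
      also have "\<dots> = int (card W) * (2 * int (card B) - int (card N)) - 2 * int (\<Sum>V\<in>W. card (B - V))"
        by (simp add: sum_subtractf sum_distrib_left of_nat_sum)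
      finally show ?thesis .
    qed
    define b where "b = int (card B)"
    define n where "n = int (card N)"
    define m where "m = int (card W)"
    define q where "q = int (card Q)"
    define s where "s = int (\<Sum>V\<in>W. card (B - V))"
    have h1: "s \<le> b" "m \<le> s" "m \<ge> 0" "q \<ge> n - b - 1" "n - b \<ge> 2" "b \<ge> 0"
      using sc sc2 sc3 cQ cT T2 cBN unfolding b_def n_def m_def q_def s_def by auto
    have tot: "sum f A \<ge> (2*b - n) + (m * (2*b - n) - 2*s) + n + q * (n - 2)"
      using split sAB s1 sW sQQ unfolding b_def n_def m_def q_def s_def f_def by simp
    have fin_ineq: "(2*b - n) + (m * (2*b - n) - 2*s) + n + q * (n - 2) \<ge> 0"
    proof (cases "2*b \<ge> n")
      case True
      have "m * (2*b - n) \<ge> 0" using True h1 by simp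
      moreover have "q * (n - 2) \<ge> 0" using h1 by simp
      ultimately show ?thesis using h1 by linarith
    next
      case False
      have "m * (2*b - n) \<ge> b * (2*b - n)"
        using False h1 by (intro mult_right_mono_neg) auto
      moreover have "q * (n - 2) \<ge> (n - b - 1) * (n - 2)"
        using h1 by (intro mult_right_mono) auto
      moreover have "b * (2*b - n) + (n - b - 1) * (n - 2) = b * (b - 1) + (n - b - 1) * (n - b - 2)"
        by (simp add: algebra_simps)
      moreover have "b * (b - 1) \<ge> 0" using h1 by (cases "b = 0") auto
      moreover have "(n - b - 1) * (n - b - 2) \<ge> 0" using h1 by simp
      ultimately show ?thesis using h1 by linarith
    qed
    show ?thesis using tot fin_ineq unfolding f_def by linarith
  qed
qed



lemma tau1:
  fixes A :: "'a set set" and N B X1 X2 :: "'a set"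
  assumes fin: "finite A" and fN: "finite N"
    and uc: "\<forall>X\<in>A. \<forall>Y\<in>A. X \<union> Y \<in> A"
    and sub: "\<forall>Y\<in>A. Y \<subseteq> N" and NA: "N \<in> A"
    and no5: "\<And>V1 V2 V3 V4 V5. V1\<in>A \<Longrightarrow> V2\<in>A \<Longrightarrow> V3\<in>A \<Longrightarrow> V4\<in>A \<Longrightarrow> V5\<in>A \<Longrightarrow>
       V1 \<subset> V2 \<Longrightarrow> V2 \<subset> V3 \<Longrightarrow> V3 \<subset> V4 \<Longrightarrow> V4 \<subset> V5 \<Longrightarrow> False"
    and X1A: "X1 \<in> A" and X2A: "X2 \<in> A"
    and s1: "2 * card X1 < card N" and s2: "2 * card X2 < card N"
    and Bdef: "B = X1 \<union> X2"
    and small: "\<forall>Y\<in>A. 2 * card Y < card N \<longrightarrow> Y \<subseteq> B"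
    and T1: "card (N - B) = 1" and n4: "card N \<ge> 4"
  shows "(\<Sum>Y\<in>A. 2 * int (card (Y \<inter> B)) - int (card B)) \<ge> 0"
proof -
  have BN: "B \<subseteq> N" using sub X1A X2A Bdef by auto
  have BA: "B \<in> A" using uc X1A X2A Bdef by auto
  have fB: "finite B" using fN BN finite_subset by blast
  have f1: "finite X1" "finite X2" using fB Bdef finite_subset by auto
  have cT: "card (N - B) = card N - card B" using BN fB by (simp add: card_Diff_subset)
  have cBN: "card B \<le> card N" using BN fN by (simp add: card_mono)
  have cB: "card B + 1 = card N" using cT T1 cBN by linarith
  have cU: "card X1 + card X2 = card B + card (X1 \<inter> X2)" using card_Un_Int[OF f1] Bdef by simp
  define k where "k = card X1"
  have k: "card X2 = k" "card B = 2 * k" "card N = 2 * k + 1" "card (X1 \<inter> X2) = 0"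
    using cB cU s1 s2 unfolding k_def by linarith+
  have disj: "X1 \<inter> X2 = {}" using k(4) f1 by simp
  have BltN: "B \<subset> N" using BN cB by auto
  define g where "g = (\<lambda>Y::'a set. 2 * int (card (Y \<inter> B)) - int (card B))"
  define AB where "AB = {Y\<in>A. Y \<subseteq> B}"
  define D where "D = {Y\<in>AB. card Y < k}"
  have finAB: "finite AB" using fin unfolding AB_def by simp
  have finD: "finite D" using finAB unfolding D_def by simp
  have nn1: "0 \<le> g Y" if "Y \<in> A - AB" for Y
  proof -
    have Y: "Y \<in> A" "\<not> Y \<subseteq> B" using that unfolding AB_def by auto
    then have "2 * card Y \<ge> card N" using small by force
    moreover have "card Y = card (Y \<inter> B) + card (Y - B)"
      using Y sub fN finite_subset[of Y N] card_Int_Diff[of Y B] by blast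
    moreover have "card (Y - B) \<le> card (N - B)"
      using Y sub fN by (intro card_mono) auto
    ultimately have "card (Y \<inter> B) \<ge> k" using T1 k by linarith
    then show ?thesis unfolding g_def using k by simp
  qed
  have split: "sum g A = sum g (A - AB) + sum g AB"
    using fin by (intro sum.subset_diff) (auto simp: AB_def)
  have p1: "sum g (A - AB) \<ge> 0" using nn1 by (intro sum_nonneg) auto
  have split2: "sum g AB = sum g (AB - D) + sum g D"
    using finAB by (intro sum.subset_diff) (auto simp: D_def)
  have BAB: "B \<in> AB - D" using BA k unfolding AB_def D_def by auto
  have p2: "g B \<le> sum g (AB - D)"
  proof (rule member_le_sum[OF BAB])
    fix Y assume "Y \<in> AB - D - {B}"
    then have "Y \<subseteq> B" "card Y \<ge> k" unfolding AB_def D_def by auto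
    then show "0 \<le> g Y" unfolding g_def using k by (simp add: Int_absorb2)
  next
    show "finite (AB - D)" using finAB by simp
  qed
  have gB: "g B = 2 * int k" unfolding g_def using k by simp
  define p where "p = (\<lambda>Y. card (X1 - Y))"
  define q where "q = (\<lambda>Y. card (X2 - Y))"
  define R where "R = (\<lambda>Y. (X1 - Y) \<times> (X2 - Y))"
  have pq: "int k * (int k - int (card Y)) \<le> int (p Y) * int (q Y)" if "Y \<in> D" for Y
  proof -
    have YB: "Y \<subseteq> B" using that unfolding D_def AB_def by auto
    have fY: "finite Y" using YB fB finite_subset by blast
    have "card Y = card (Y \<inter> X1) + card (Y \<inter> X2)"
    proof -
      have "Y = (Y \<inter> X1) \<union> (Y \<inter> X2)" using YB Bdef by auto
      moreover have "card ((Y \<inter> X1) \<union> (Y \<inter> X2)) = card (Y \<inter> X1) + card (Y \<inter> X2)"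
        by (rule card_Un_disjoint) (use fY disj in auto)
      ultimately show ?thesis by simp
    qed
    moreover have "card (X1 - Y) = k - card (Y \<inter> X1)" unfolding k_def using f1
      card_Diff_subset_Int[of X1 Y] by (simp add: Int_commute)
    moreover have "card (X2 - Y) = k - card (Y \<inter> X2)" using f1 k(1)
      card_Diff_subset_Int[of X2 Y] by (simp add: Int_commute)
    moreover have "card (Y \<inter> X1) \<le> k" unfolding k_def using f1 by (simp add: card_mono)
    moreover have "card (Y \<inter> X2) \<le> k" using f1 k(1) by (metis card_mono inf_le2)
    ultimately have e: "int (card Y) = 2 * int k - int (p Y) - int (q Y)" "p Y \<le> k" "q Y \<le> k"
      unfolding p_def q_def by auto
    have "(int k - int (p Y)) * (int k - int (q Y)) \<ge> 0" using e by simp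
    moreover have "int k * (int k - int (card Y)) = int (p Y) * int (q Y) - (int k - int (p Y)) * (int k - int (q Y))"
      by (simp add: e(1) algebra_simps)
    ultimately show ?thesis by linarith
  qed
  have Rdisj: "\<forall>Y\<in>D. \<forall>Y'\<in>D. Y \<noteq> Y' \<longrightarrow> R Y \<inter> R Y' = {}"
  proof (intro ballI impI, rule ccontr)
    fix Y Y' assume Y: "Y \<in> D" "Y' \<in> D" "Y \<noteq> Y'" and ne: "R Y \<inter> R Y' \<noteq> {}"
    then obtain a c where ac: "a \<in> X1" "a \<notin> Y" "a \<notin> Y'" "c \<in> X2" "c \<notin> Y" "c \<notin> Y'"
      unfolding R_def by auto
    have YA: "Y \<in> A" "Y' \<in> A" "Y \<subseteq> B" "Y' \<subseteq> B" using Y unfolding D_def AB_def by auto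
    define V where "V = Y \<union> Y'"
    have VA: "V \<in> A" using uc YA unfolding V_def by auto
    have VX: "V \<union> X1 \<in> A" using uc VA X1A by auto
    have c1: "V \<subset> V \<union> X1" using ac unfolding V_def by auto
    have c2: "V \<union> X1 \<subset> B" using ac YA disj Bdef unfolding V_def by auto
    have c0: "Y \<subset> V \<or> Y' \<subset> V" using Y(3) unfolding V_def by auto
    show False using c0 no5[OF _ VA VX BA NA _ c1 c2 BltN] YA by blast
  qed
  have sumpq: "(\<Sum>Y\<in>D. p Y * q Y) \<le> k * k"
  proof -
    have "(\<Sum>Y\<in>D. p Y * q Y) = (\<Sum>Y\<in>D. card (R Y))"
      unfolding p_def q_def R_def by (simp add: card_cartesian_product)
    also have "\<dots> = card (\<Union>Y\<in>D. R Y)"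
      using card_UN_disjoint[OF finD _ Rdisj] f1 unfolding R_def by simp
    also have "\<dots> \<le> card (X1 \<times> X2)"
      using f1 by (intro card_mono) (auto simp: R_def)
    also have "\<dots> = k * k" using k(1) unfolding k_def by (simp add: card_cartesian_product)
    finally show ?thesis .
  qed
  have kpos: "k > 0" using k n4 by linarith
  have "int k * (\<Sum>Y\<in>D. (int k - int (card Y))) = (\<Sum>Y\<in>D. int k * (int k - int (card Y)))"
    by (simp add: sum_distrib_left)
  also have "\<dots> \<le> (\<Sum>Y\<in>D. int (p Y) * int (q Y))"
    using pq by (intro sum_mono) auto
  also have "\<dots> = int (\<Sum>Y\<in>D. p Y * q Y)" by (simp add: of_nat_sum)
  also have "\<dots> \<le> int k * int k" using sumpq by (metis of_nat_le_iff of_nat_mult)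
  finally have "int k * (\<Sum>Y\<in>D. (int k - int (card Y))) \<le> int k * int k" .
  then have sD: "(\<Sum>Y\<in>D. (int k - int (card Y))) \<le> int k" using kpos by simp
  have gD: "sum g D = - 2 * (\<Sum>Y\<in>D. (int k - int (card Y)))"
  proof -
    have "sum g D = (\<Sum>Y\<in>D. - 2 * (int k - int (card Y)))"
    proof (intro sum.cong refl)
      fix Y assume "Y \<in> D"
      then have "Y \<inter> B = Y" unfolding D_def AB_def by auto
      then show "g Y = - 2 * (int k - int (card Y))" unfolding g_def using k by simp
    qed
    then show ?thesis by (simp add: sum_distrib_left)
  qed
  show ?thesis using split split2 p1 p2 gB gD sD unfolding g_def by linarith
qed



lemma fromN:
  fixes A :: "'a set set"
  assumes "finite A" "finite N" "N \<noteq> {}" "\<forall>Y\<in>A. Y \<subseteq> N"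
    "(\<Sum>Y\<in>A. 2 * int (card Y) - int (card N)) \<ge> 0"
  shows "\<exists>x\<in>N. real (card {Y\<in>A. x \<in> Y}) \<ge> real (card A) / 2"
proof -
  have "(\<Sum>Y\<in>A. 2 * int (card (Y \<inter> N)) - int (card N)) = (\<Sum>Y\<in>A. 2 * int (card Y) - int (card N))"
    using assms(4) by (intro sum.cong) (auto simp: Int_absorb2)
  then show ?thesis using avg[OF assms(1,2,3)] assms(5) by simp
qed

theorem corollary2p2:
  fixes A :: "nat set set" and n :: nat
  assumes "union_closed A"
    and "\<Union>A = {1..n}"
    and "separating A"
    and "height A = 4"
    and "4 \<le> n"
    and "B_size A n \<le> 2"
  shows "\<exists>x\<in>{1..n}. real (card {X\<in>A. x \<in> X}) \<ge> real (card A) / 2"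
proof -
  define N where "N = {1..n}"
  have fN: "finite N" and cN: "card N = n" unfolding N_def by auto
  have fin: "finite A" and uc: "\<forall>X\<in>A. \<forall>Y\<in>A. X \<union> Y \<in> A" and ne: "\<exists>X\<in>A. X \<noteq> {}"
    using assms(1) unfolding union_closed_def by auto
  have sub: "\<forall>Y\<in>A. Y \<subseteq> N" using assms(2) unfolding N_def by auto
  have NA: "N \<in> A" using union_mem[OF uc fin _ subset_refl] ne assms(2) unfolding N_def by auto
  have Nne: "N \<noteq> {}" using cN assms(5) by auto
  have sep: "\<forall>x\<in>N. \<forall>y\<in>N. x \<noteq> y \<longrightarrow> (\<exists>X\<in>A. (x\<in>X) \<noteq> (y\<in>X))"
    using assms(3,2) unfolding separating_def N_def by simp
  have no5: "\<And>V1 V2 V3 V4 V5. V1\<in>A \<Longrightarrow> V2\<in>A \<Longrightarrow> V3\<in>A \<Longrightarrow> V4\<in>A \<Longrightarrow> V5\<in>A \<Longrightarrow>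
       V1 \<subset> V2 \<Longrightarrow> V2 \<subset> V3 \<Longrightarrow> V3 \<subset> V4 \<Longrightarrow> V4 \<subset> V5 \<Longrightarrow> False"
    using no5[OF assms(4) fin] by blast
  define L where "L = family_lt A (real n / 2)"
  have Lchar: "L = {Y\<in>A. 2 * card Y < card N}"
    unfolding L_def family_lt_def cN by auto
  define P where "P = (\<lambda>k. \<exists>S. S \<subseteq> L \<and> irredundant S \<and> \<Union>S = \<Union>L \<and> card S = k)"
  have finL: "finite L" using fin unfolding Lchar by simp
  have exP: "\<exists>k. P k"
  proof -
    define C where "C = {S. S \<subseteq> L \<and> \<Union>S = \<Union>L}"
    have "L \<in> C" unfolding C_def by simp
    then obtain S0 where S0: "S0 \<in> C" and mn: "\<forall>S'. S' \<in> C \<longrightarrow> card S0 \<le> card S'"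
      using ex_has_least_nat[of "\<lambda>S. S \<in> C" L card] by blast
    have fS0: "finite S0" using S0 finL unfolding C_def by (auto intro: finite_subset)
    have "irredundant S0"
      unfolding irredundant_def
    proof
      fix X assume X: "X \<in> S0"
      show "irr S0 X \<noteq> {}"
      proof
        assume "irr S0 X = {}"
        then have "X \<subseteq> \<Union>(S0 - {X})" unfolding irr_def by auto
        then have "\<Union>(S0 - {X}) = \<Union>S0" using X by auto
        then have "S0 - {X} \<in> C" using S0 unfolding C_def by auto
        then have "card S0 \<le> card (S0 - {X})" using mn by blast
        moreover have "card (S0 - {X}) < card S0" using X fS0 by (meson card_Diff1_less)
        ultimately show False by simp
      qed
    qed
    then show ?thesis using S0 unfolding P_def C_def by blast
  qed
  have "P (LEAST k. P k)" using exP by (rule LeastI_ex)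
  then obtain S where S: "S \<subseteq> L" "\<Union>S = \<Union>L" "card S = B_size A n"
    unfolding P_def B_size_def L_def by blast
  have fS: "finite S" using S(1) finL finite_subset by blast
  define B where "B = \<Union>L"
  have small: "\<forall>Y\<in>A. 2 * card Y < card N \<longrightarrow> Y \<subseteq> B"
    unfolding B_def Lchar by auto
  have cS: "card S \<le> 2" using S(3) assms(6) by simp
  have "card S = 0 \<or> card S = 1 \<or> card S = 2" using cS by linarith
  moreover
  { assume c0: "card S = 0"
    then have "S = {}" using fS by simp
    then have B0: "B = {}" using S(2) unfolding B_def by simp
    have ?thesis
    proof (cases "{} \<in> A")
      case True
      have "card (N - {}) \<ge> 2" using cN assms(5) by simp
      then have "(\<Sum>Y\<in>A. 2 * int (card Y) - int (card N)) \<ge> 0"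
        using core[OF fin fN uc sub NA sep no5 True _ _ ] small B0 by auto
      then show ?thesis using fromN[OF fin fN Nne sub] unfolding N_def by simp
    next
      case False
      have "\<forall>Y\<in>A. 0 \<le> 2 * int (card Y) - int (card N)"
      proof
        fix Y assume "Y \<in> A"
        then have "\<not> 2 * card Y < card N" using small B0 False by auto
        then show "0 \<le> 2 * int (card Y) - int (card N)" by simp
      qed
      then have "(\<Sum>Y\<in>A. 2 * int (card Y) - int (card N)) \<ge> 0" by (intro sum_nonneg) auto
      then show ?thesis using fromN[OF fin fN Nne sub] unfolding N_def by simp
    qed }
  moreover
  { assume c1: "card S = 1"
    then obtain X1 where S1: "S = {X1}" by (auto simp: card_Suc_eq)
    then have X1: "X1 \<in> A" "2 * card X1 < card N" using S(1) Lchar by auto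
    have BX: "B = X1" using S(2) S1 unfolding B_def by simp
    have BN: "B \<subseteq> N" using sub X1 BX by auto
    have fB: "finite B" using BN fN finite_subset by blast
    have "card (N - B) = card N - card B" using BN fB by (simp add: card_Diff_subset)
    moreover have "card B + 2 \<le> card N" using X1 BX cN assms(5) by simp
    ultimately have "card (N - B) \<ge> 2" by linarith
    then have "(\<Sum>Y\<in>A. 2 * int (card Y) - int (card N)) \<ge> 0"
      using core[OF fin fN uc sub NA sep no5 _ BN small] X1 BX by auto
    then have ?thesis using fromN[OF fin fN Nne sub] unfolding N_def by simp }
  moreover
  { assume c2: "card S = 2"
    then obtain X1 X2 where S2: "S = {X1, X2}" by (auto simp: card_Suc_eq numeral_2_eq_2)
    then have X: "X1 \<in> A" "2 * card X1 < card N" "X2 \<in> A" "2 * card X2 < card N"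
      using S(1) Lchar by auto
    have BX: "B = X1 \<union> X2" using S(2) S2 unfolding B_def by simp
    have BA: "B \<in> A" using uc X BX by auto
    have BN: "B \<subseteq> N" using sub BA by auto
    have fB: "finite B" using BN fN finite_subset by blast
    have "card B \<le> card X1 + card X2" using BX card_Un_le by metis
    then have cBn: "card B < card N" using X by linarith
    have cT: "card (N - B) = card N - card B" using BN fB by (simp add: card_Diff_subset)
    have ?thesis
    proof (cases "card (N - B) \<ge> 2")
      case True
      then have "(\<Sum>Y\<in>A. 2 * int (card Y) - int (card N)) \<ge> 0"
        using core[OF fin fN uc sub NA sep no5 BA BN small] by auto
      then show ?thesis using fromN[OF fin fN Nne sub] unfolding N_def by simp
    next
      case False
      then have T1: "card (N - B) = 1" using cT cBn by linarith
      have n4: "card N \<ge> 4" using cN assms(5) by simp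
      have h: "(\<Sum>Y\<in>A. 2 * int (card (Y \<inter> B)) - int (card B)) \<ge> 0"
        using tau1[OF fin fN uc sub NA no5 X(1,3,2,4) BX small T1 n4] .
      have "B \<noteq> {}" using T1 cT n4 by auto
      then obtain x where "x \<in> B" "real (card {Y\<in>A. x \<in> Y}) \<ge> real (card A) / 2"
        using avg[OF fin fB _ h] by blast
      then show ?thesis using BN unfolding N_def by blast
    qed }
  ultimately show ?thesis by blast
qed


end
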